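(* Let $B:(0,1)\times(0,1)\to\mathbb{R}$ be separately Lebesgue measurable (measurable in each variable when the other is fixed) and satisfy $$B(x,y)+(1-x)B\Big(\frac{u}{1-x},\frac{v}{1-y}\Big)=B(u,v)+(1-u)B\Big(\frac{x}{1-u},\frac{y}{1-v}\Big)$$ for all $x,y,u,v$ with $x,y,u,v,x+u,y+v\in(0,1)$, together with $B(x,y)=B(1-x,1-y)$ and $B(x,x)=0$ for all $x,y\in(0,1)$. Then there exists $c\in\mathbb{R}$ such that $$B(x,y)=c\Big(x\log\frac{x}{y}+(1-x)\log\frac{1-x}{1-y}\Big),\qquad x,y\in(0,1).$$
   Context: $\log$ is the natural logarithm. *)

theory Defs
  imports "HOL-Analysis.Analysis"
begin

end

theory Submission imports Defs "HOL-Analysis.Analysis" begin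

lemma steinhaus_bound:
  fixes f :: "real \<Rightarrow> real"
  assumes fm: "f \<in> borel_measurable lebesgue" and add: "\<And>x y. f (x+y) = f x + f y"
  shows "\<exists>d>0. \<exists>M. \<forall>t. \<bar>t\<bar> < d \<longrightarrow> \<bar>f t\<bar> \<le> M"
proof -
  define E where "E n = {t \<in> {0..1::real}. \<bar>f t\<bar> \<le> real n}" for n :: nat
  have Eleb: "E n \<in> sets lebesgue" for n
  proof -
    have "(\<lambda>t. \<bar>f t\<bar>) -` {..real n} \<inter> space lebesgue \<in> sets lebesgue"
      by (rule measurable_sets[OF borel_measurable_abs[OF fm]]) simp
    then have "{t. \<bar>f t\<bar> \<le> real n} \<in> sets lebesgue" by (simp add: vimage_def)
    moreover have "{0..1::real} \<in> sets lebesgue" by simp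
    ultimately have "{t. \<bar>f t\<bar> \<le> real n} \<inter> {0..1} \<in> sets lebesgue" by blast
    moreover have "E n = {t. \<bar>f t\<bar> \<le> real n} \<inter> {0..1}" unfolding E_def by auto
    ultimately show ?thesis by simp
  qed
  have Elm: "E n \<in> lmeasurable" for n
    by (rule bounded_set_imp_lmeasurable[OF _ Eleb])
       (rule bounded_subset[of "{0..1}"], auto simp: E_def)
  have UE: "(\<Union>n. E n) = {0..1}"
  proof
    show "{0..1} \<subseteq> (\<Union>n. E n)"
    proof
      fix t :: real assume t: "t \<in> {0..1}"
      have "\<bar>f t\<bar> \<le> real (nat \<lceil>\<bar>f t\<bar>\<rceil>)" by linarith
      with t show "t \<in> (\<Union>n. E n)" unfolding E_def by blast
    qed
  qed (auto simp: E_def)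
  obtain n where nneg: "\<not> negligible (E n)"
  proof -
    have "\<not> negligible {0..1::real}"
      using negligible_interval(1)[of "0::real" 1] by simp
    then show ?thesis using that negligible_Union_nat[of E] UE by auto
  qed
  define m where "m = measure lebesgue (E n)"
  have m0: "m > 0" using nneg negligible_iff_measure0[OF Elm[of n]] m_def
    by (metis less_eq_real_def measure_nonneg)
  obtain K where K: "closed K" "K \<subseteq> E n" "E n - K \<in> lmeasurable"
      "emeasure lebesgue (E n - K) < ennreal (m/2)"
    using sets_lebesgue_inner_closed[OF Eleb[of n], of "m/2"] m0 by auto
  have Kb: "bounded K" by (rule bounded_subset[of "{0..1}"]) (use K(2) in \<open>auto simp: E_def\<close>)
  have Kc: "compact K" using K(1) Kb compact_eq_bounded_closed by blast
  have Klm: "K \<in> lmeasurable" using Kc lmeasurable_compact by blast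
  have mEK: "measure lebesgue (E n - K) < m/2"
    using K(4) emeasure_eq_measure2[OF K(3)] m0
    by (metis ennreal_less_iff less_eq_real_def measure_nonneg)
  have "m \<le> measure lebesgue K + measure lebesgue (E n - K)"
  proof -
    have "E n = K \<union> (E n - K)" using K(2) by auto
    then have "measure lebesgue (E n) = measure lebesgue (K \<union> (E n - K))" by simp
    also have "\<dots> \<le> measure lebesgue K + measure lebesgue (E n - K)"
      by (rule measure_Un_le) (use Klm K(3) in auto)
    finally show ?thesis by (simp add: m_def)
  qed
  define k where "k = measure lebesgue K"
  have k0: "k > 0" using mEK \<open>m \<le> _\<close> k_def m0 by linarith
  obtain U where U: "open U" "K \<subseteq> U" "U - K \<in> lmeasurable" "emeasure lebesgue (U - K) < ennreal k"
    using sets_lebesgue_outer_open[OF fmeasurableD[OF Klm] k0] by blast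
  have mUK: "measure lebesgue (U - K) < k"
    using U(4) emeasure_eq_measure2[OF U(3)] k0
    by (metis ennreal_less_iff less_eq_real_def measure_nonneg)
  have Ulm: "U \<in> lmeasurable"
  proof -
    have "U = K \<union> (U - K)" using U(2) by auto
    then show ?thesis using Klm U(3) by (metis fmeasurable.Un)
  qed
  have mU: "measure lebesgue U < 2 * k"
  proof -
    have "U = K \<union> (U - K)" using U(2) by auto
    then have "measure lebesgue U = measure lebesgue (K \<union> (U - K))" by simp
    also have "\<dots> \<le> measure lebesgue K + measure lebesgue (U - K)"
      by (rule measure_Un_le) (use Klm U(3) in auto)
    finally show ?thesis using mUK k_def by linarith
  qed
  have "K \<inter> - U = {}" using U(2) by auto
  then obtain d where d: "d > 0" "\<forall>x\<in>K. \<forall>y\<in>- U. d \<le> dist x y"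
    using separate_compact_closed[OF Kc, of "- U"] U(1) by (auto simp: closed_Compl)
  have "\<forall>t. \<bar>t\<bar> < d \<longrightarrow> \<bar>f t\<bar> \<le> 2 * real n"
  proof (intro allI impI)
    fix t :: real assume t: "\<bar>t\<bar> < d"
    define K' where "K' = (+) t ` K"
    have K'lm: "K' \<in> lmeasurable" unfolding K'_def using Klm by (rule measurable_translation)
    have mK': "measure lebesgue K' = k" unfolding K'_def k_def by (rule measure_translation)
    have K'U: "K' \<subseteq> U"
    proof
      fix z assume "z \<in> K'"
      then obtain x where x: "x \<in> K" "z = t + x" unfolding K'_def by auto
      show "z \<in> U"
      proof (rule ccontr)
        assume "z \<notin> U"
        then have "d \<le> dist x z" using d(2) x(1) by auto
        then show False using x(2) t by (simp add: dist_real_def)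
      qed
    qed
    have "K \<inter> K' \<noteq> {}"
    proof
      assume dis: "K \<inter> K' = {}"
      have "measure lebesgue (K \<union> K') = k + k"
        using measure_Un3[OF Klm K'lm] dis mK' k_def by simp
      moreover have "measure lebesgue (K \<union> K') \<le> measure lebesgue U"
        by (rule measure_mono_fmeasurable) (use U(2) K'U Klm K'lm Ulm in auto)
      ultimately show False using mU by linarith
    qed
    then obtain x y where xy: "x \<in> K" "y \<in> K" "x = t + y" unfolding K'_def by auto
    have "f x = f t + f y" using add xy(3) by simp
    moreover have "\<bar>f x\<bar> \<le> real n" "\<bar>f y\<bar> \<le> real n" using xy K(2) by (auto simp: E_def)
    ultimately show "\<bar>f t\<bar> \<le> 2 * real n" by linarith
  qed
  then show ?thesis using d(1) by blast
qed

lemma additive_bounded_linear: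
  fixes f :: "real \<Rightarrow> real"
  assumes add: "\<And>x y. f (x+y) = f x + f y"
    and d: "d > 0" and bd: "\<And>t. \<bar>t\<bar> < d \<Longrightarrow> \<bar>f t\<bar> \<le> M"
  shows "f x = f 1 * x"
proof -
  define g where "g x = f x - f 1 * x" for x
  have gadd: "g (x + y) = g x + g y" for x y unfolding g_def using add[of x y] by (simp add: algebra_simps)
  have g0: "g 0 = 0" using gadd[of 0 0] by simp
  have gneg: "g (- x) = - g x" for x using gadd[of x "-x"] g0 by simp
  have gnat: "g (real k * x) = real k * g x" for k :: nat and x
    by (induction k) (auto simp: g0 gadd distrib_right)
  have gint: "g (real_of_int z * x) = real_of_int z * g x" for z :: int and x
  proof (cases "z \<ge> 0")
    case True then show ?thesis using gnat[of "nat z" x] by simp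
  next
    case False
    then have "real_of_int z * x = - (real (nat (- z)) * x)" by simp
    then show ?thesis using gnat[of "nat (-z)" x] gneg False by simp
  qed
  have g1: "g 1 = 0" by (simp add: g_def)
  define d' where "d' = min d 1"
  define M' where "M' = M + \<bar>f 1\<bar>"
  have d'0: "d' > 0" using d by (simp add: d'_def)
  have gb: "\<bar>g t\<bar> \<le> M'" if "\<bar>t\<bar> < d'" for t
  proof -
    have "\<bar>f 1 * t\<bar> \<le> \<bar>f 1\<bar>" using that d'_def by (simp add: abs_mult mult_left_le)
    then show ?thesis using bd[of t] that d'_def unfolding g_def M'_def by linarith
  qed
  have gsmall: "\<bar>g t\<bar> \<le> M' / real n" if "n \<ge> 1" "\<bar>t\<bar> < d' / real n" for t n
  proof -
    have "\<bar>real n * t\<bar> < d'" using that by (simp add: abs_mult field_simps)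
    then have "\<bar>g (real n * t)\<bar> \<le> M'" by (rule gb)
    then have "real n * \<bar>g t\<bar> \<le> M'" by (simp add: gnat abs_mult)
    then show ?thesis using that by (simp add: field_simps)
  qed
  have gx: "\<bar>g x\<bar> \<le> M' / real n" if n: "n \<ge> 1" for n
  proof -
    obtain m :: nat where m: "real m > real n / d'" using reals_Archimedean2 by blast
    have "real n / d' > 0" using n d'0 by simp
    then have m0: "real m > 0" using m by linarith
    have inv: "1 / real m < d' / real n" using m m0 n d'0 by (simp add: field_simps)
    define z where "z = \<lfloor>real m * x\<rfloor>"
    define r where "r = x - real_of_int z / real m"
    have r0: "0 \<le> r" unfolding r_def z_def using m0 by (simp add: field_simps)
    have fz: "real m * x < real_of_int z + 1" unfolding z_def
      using real_of_int_floor_add_one_gt[of "real m * x"] by simp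
    then have "x < (real_of_int z + 1) / real m" using m0 by (simp add: field_simps)
    moreover have "(real_of_int z + 1) / real m = real_of_int z / real m + 1 / real m"
      by (simp add: add_divide_distrib)
    ultimately have r1: "r < 1 / real m" unfolding r_def by linarith
    have gm: "g (1 / real m) = 0"
    proof -
      have "real m * g (1 / real m) = g (real m * (1 / real m))" by (rule gnat[symmetric])
      also have "\<dots> = 0" using m0 g1 by simp
      finally show ?thesis using m0 by simp
    qed
    have "g (real_of_int z / real m) = 0"
      using gint[of z "1 / real m"] gm by simp
    then have "g x = g r" using gadd[of "real_of_int z / real m" r] by (simp add: r_def)
    moreover have "\<bar>r\<bar> < d' / real n" using r0 r1 inv by linarith
    ultimately show ?thesis using gsmall[OF n] by simp
  qed
  have "g x = 0"
  proof (rule ccontr)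
    assume ne: "g x \<noteq> 0"
    obtain n :: nat where n: "real n > M' / \<bar>g x\<bar>" using reals_Archimedean2 by blast
    define n' where "n' = max n 1"
    have "real n' > M' / \<bar>g x\<bar>" using n by (simp add: n'_def)
    then have "real n' * \<bar>g x\<bar> > M'" using ne by (simp add: field_simps)
    moreover have "\<bar>g x\<bar> \<le> M' / real n'" using gx[of n'] by (simp add: n'_def)
    ultimately show False using ne by (simp add: field_simps n'_def)
  qed
  then show ?thesis by (simp add: g_def)
qed

lemma measurable_additive_linear:
  fixes f :: "real \<Rightarrow> real"
  assumes fm: "f \<in> borel_measurable lebesgue" and add: "\<And>x y. f (x+y) = f x + f y"
  shows "f x = f 1 * x"
proof -
  obtain d M where "d > 0" "\<forall>t. \<bar>t\<bar> < d \<longrightarrow> \<bar>f t\<bar> \<le> M"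
    using steinhaus_bound[OF fm add] by blast
  then show ?thesis using additive_bounded_linear[OF add, of d M x] by blast
qed

lemma logistic_comp_meas:
  fixes A :: "real \<Rightarrow> real"
  assumes Am: "A \<in> borel_measurable (restrict_space lebesgue {0<..<1::real})"
  shows "(\<lambda>t. A (exp t / (1 + exp t))) \<in> borel_measurable lebesgue"
proof -
  define sg where "sg t = exp t / (1 + exp t)" for t :: real
  define lg where "lg y = ln y - ln (1 - y)" for y :: real
  have sg01: "sg t \<in> {0<..<1}" for t
  proof -
    have e: "exp t > 0" by simp
    have h: "1 + exp t > 0" using e by linarith
    have "exp t / (1 + exp t) > 0" using divide_pos_pos[OF e h] .
    moreover have "exp t / (1 + exp t) < 1" using divide_less_eq_1_pos[OF h] by simp
    ultimately have "exp t / (1 + exp t) > 0" "exp t / (1 + exp t) < 1" by auto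
    then show ?thesis by (simp add: sg_def)
  qed
  have lgsg: "lg (sg t) = t" for t
  proof -
    have e: "exp t > 0" by simp
    have h: "1 + exp t > 0" using e by linarith
    then have h': "1 + exp t \<noteq> 0" by linarith
    have "1 - sg t = 1 / (1 + exp t)" using h' by (simp add: sg_def field_simps)
    then show ?thesis using e h
      by (simp add: lg_def sg_def ln_div)
  qed
  have sglg: "sg (lg y) = y" if "y \<in> {0<..<1}" for y
  proof -
    have y: "0 < y" "y < 1" using that by auto
    have "exp (lg y) = y / (1 - y)" using y by (simp add: lg_def exp_diff)
    then have "sg (lg y) = (y / (1 - y)) / (1 + y / (1 - y))" by (simp add: sg_def)
    also have "\<dots> = y" using y by (simp add: field_simps)
    finally show ?thesis .
  qed
  have lgd: "lg differentiable_on S" if "S \<subseteq> {0<..<1}" for S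
  proof (rule differentiable_at_imp_differentiable_on)
    fix y assume "y \<in> S"
    then have y: "0 < y" "y < 1" using that by auto
    have "(lg has_real_derivative (1/y + 1/(1-y))) (at y)"
      unfolding lg_def using y by (auto intro!: derivative_eq_intros simp: field_simps)
    then show "lg differentiable (at y)"
      by (rule differentiableI[OF has_field_derivative_imp_has_derivative])
  qed
  have "\<forall>T. T \<in> sets borel \<longrightarrow> {x \<in> UNIV. A (sg x) \<in> T} \<in> sets lebesgue"
  proof (intro allI impI)
    fix T :: "real set" assume T: "T \<in> sets borel"
    have ST: "{x \<in> {0<..<1}. A x \<in> T} \<in> sets lebesgue"
      using Am T borel_measurable_lebesgue_on_preimage_borel[of "{0<..<1::real}" A] by auto
    have eq: "{x. A (sg x) \<in> T} = lg ` {x \<in> {0<..<1}. A x \<in> T}"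
    proof
      show "{x. A (sg x) \<in> T} \<subseteq> lg ` {x \<in> {0<..<1}. A x \<in> T}"
      proof
        fix t assume "t \<in> {x. A (sg x) \<in> T}"
        then have "sg t \<in> {x \<in> {0<..<1}. A x \<in> T}" using sg01 by auto
        then show "t \<in> lg ` {x \<in> {0<..<1}. A x \<in> T}" using lgsg[of t] by (metis image_eqI)
      qed
      show "lg ` {x \<in> {0<..<1}. A x \<in> T} \<subseteq> {x. A (sg x) \<in> T}"
        using sglg by auto
    qed
    have "{x. A (sg x) \<in> T} \<in> sets lebesgue"
      unfolding eq by (rule differentiable_image_in_sets_lebesgue[OF ST]) (auto intro: lgd)
    then show "{x \<in> UNIV. A (sg x) \<in> T} \<in> sets lebesgue" by simp
  qed
  then have "(\<lambda>t. A (sg t)) \<in> borel_measurable (lebesgue_on UNIV)"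
    using borel_measurable_lebesgue_on_preimage_borel[of UNIV "\<lambda>x. A (sg x)"] by simp
  then show ?thesis by (simp add: sg_def lebesgue_on_UNIV_eq)
qed

lemma pexider_linear:
  fixes F G H :: "real \<Rightarrow> real \<Rightarrow> real"
  assumes hom: "\<And>t s c. t > 0 \<Longrightarrow> s > 0 \<Longrightarrow> c > 0 \<Longrightarrow> F (t* s) (t*c) = t * F s c"
    and pex: "\<And>a b c. a > 0 \<Longrightarrow> b > 0 \<Longrightarrow> c > 0 \<Longrightarrow> F (a+b) c = G a (b+c) + H b c"
  shows "\<exists>p q. \<forall>s c. s > 0 \<longrightarrow> c > 0 \<longrightarrow> F s c = p* s + q*c"
proof -
  have shift: "F (s+h) c - F s c = F (s'+h) c' - F s' c'"
    if h: "h > 0" "s > 0" "c > 0" "s' > 0" "c' > 0" "s + c = s' + c'" for h s c s' c'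
  proof -
    define a where "a = min s s' / 2"
    have a: "a > 0" "a < s" "a < s'" using h by (auto simp: a_def)
    have "F ((a+h)+(s-a)) c = G (a+h) ((s-a)+c) + H (s-a) c" by (rule pex) (use a h in auto)
    moreover have "F (a+(s-a)) c = G a ((s-a)+c) + H (s-a) c" by (rule pex) (use a h in auto)
    moreover have "F ((a+h)+(s'-a)) c' = G (a+h) ((s'-a)+c') + H (s'-a) c'" by (rule pex) (use a h in auto)
    moreover have "F (a+(s'-a)) c' = G a ((s'-a)+c') + H (s'-a) c'" by (rule pex) (use a h in auto)
    moreover have "(s-a)+c = (s'-a)+c'" using h by simp
    moreover have "(a+h)+(s-a) = s+h" "a+(s-a) = s" "(a+h)+(s'-a) = s'+h" "a+(s'-a) = s'" by simp_all
    ultimately show ?thesis by simp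
  qed
  have step2: "F (z-c) c - F (z-c') c' = F (z'-c) c - F (z'-c') c'"
    if h: "c > 0" "c' > 0" "z > c" "z > c'" "z' > c" "z' > c'" for c c' z z'
  proof -
    have *: "F (z-c) c - F (z-c') c' = F (z'-c) c - F (z'-c') c'"
      if h: "c > 0" "c' > 0" "z > c" "z > c'" "z' > c" "z' > c'" "z < z'" for c c' z z'
    proof -
      have "F ((z-c)+(z'-z)) c - F (z-c) c = F ((z-c')+(z'-z)) c' - F (z-c') c'"
        by (rule shift) (use h in auto)
      moreover have "(z-c)+(z'-z) = z'-c" "(z-c')+(z'-z) = z'-c'" by simp_all
      ultimately show ?thesis by simp
    qed
    consider "z < z'" | "z = z'" | "z' < z" by linarith
    then show ?thesis
    proof cases
      case 1 then show ?thesis using *[OF h] by simp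
    next
      case 2 then show ?thesis by simp
    next
      case 3 then show ?thesis using *[of c c' z' z] h by simp
    qed
  qed
  define K where "K z = F (z-1) 1" for z
  define L where "L c = F 2 c - F (c+1) 1" for c
  have rep: "F s c = K (s+c) + L c" if "s > 0" "c > 0" "s + c > 1" for s c
  proof -
    have "F ((s+c)-c) c - F ((s+c)-1) 1 = F ((c+2)-c) c - F ((c+2)-1) 1"
      by (rule step2) (use that in auto)
    moreover have "(s+c)-c = s" "(c+2)-c = 2" "(c+2)-1 = c+1" by simp_all
    ultimately show ?thesis by (simp add: K_def L_def)
  qed
  define m where "m t = t * L (1/2) - L (t/2)" for t
  have Km: "K (t*z) = t * K z + m t" if "t \<ge> 1" "z > 1" for t z
  proof -
    have a1: "F (t*(z-1/2)) (t*(1/2)) = t * F (z-1/2) (1/2)" by (rule hom) (use that in auto)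
    have a2: "F (t*(z-1/2)) (t*(1/2)) = K (t*(z-1/2) + t*(1/2)) + L (t*(1/2))"
    proof (rule rep)
      show "t*(z-1/2) > 0" using that by (simp add: mult_pos_pos)
      have "t*(z-1/2) + t*(1/2) = t*z" by (simp add: algebra_simps)
      also have "\<dots> > 1" using that by (metis less_le_trans mult_less_cancel_left1 nle_le not_less_iff_gr_or_eq zero_less_one)
      finally show "t*(z-1/2) + t*(1/2) > 1" .
    qed (use that in auto)
    have a3: "F (z-1/2) (1/2) = K ((z-1/2) + 1/2) + L (1/2)" by (rule rep) (use that in auto)
    have e1: "t*(z-1/2) + t*(1/2) = t*z" by (simp add: algebra_simps)
    have e2: "t*(1/2) = t/2" "(z-1/2) + 1/2 = z" by simp_all
    from a1 a2 a3 show ?thesis unfolding e1 e2 m_def by (simp add: algebra_simps)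
  qed
  have mlin: "m t = (t - 1) * m 2" if "t \<ge> 1" for t
  proof -
    have 1: "K (t*4) = t * K 4 + m t" using Km[of t 4] that by simp
    have 2: "K (2*2) = 2 * K 2 + m 2" using Km[of 2 2] by simp
    have 3: "K (2*(2*t)) = 2 * K (2*t) + m 2" using Km[of 2 "2*t"] that by simp
    have 4: "K (t*2) = t * K 2 + m t" using Km[of t 2] that by simp
    have 5: "K (t*4) = K (2*(2*t))" by (rule arg_cong[where f=K]) simp
    have 6: "K (2*t) = K (t*2)" by (rule arg_cong[where f=K]) simp
    have 7: "t * K 4 + m t = 2 * (t * K 2 + m t) + m 2" using 1 3 4 5 6 by simp
    have 8: "K 4 = 2 * K 2 + m 2" using 2 by simp
    have "t * (2 * K 2 + m 2) + m t = 2 * (t * K 2 + m t) + m 2" using 7 8 by simp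
    then have "t * m 2 = m t + m 2" by (simp add: distrib_left)
    then show ?thesis by (simp add: left_diff_distrib)
  qed
  have Kaff: "K x = (x/2) * K 2 + m 2 * (x/2 - 1)" if "x \<ge> 2" for x
  proof -
    have "K ((x/2)*2) = (x/2) * K 2 + m (x/2)" using Km[of "x/2" 2] that by simp
    moreover have "(x/2)*2 = x" by simp
    moreover have "m (x/2) = (x/2 - 1) * m 2" using mlin[of "x/2"] that by simp
    ultimately show ?thesis by (simp add: algebra_simps)
  qed
  define p where "p = K 2 / 2 + m 2 / 2"
  have big: "F s c = p* s + (p*c - m 2 + L c)" if "s > 0" "c > 0" "s + c \<ge> 2" for s c
    using rep[of s c] Kaff[of "s+c"] that unfolding p_def by (simp add: field_simps)
  define q where "q = (p*2 - m 2 + L 2) / 2"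
  have "\<forall>s c. s > 0 \<longrightarrow> c > 0 \<longrightarrow> F s c = p * s + q * c"
  proof (intro allI impI)
    fix s c :: real assume sc: "s > 0" "c > 0"
    define t where "t = 2 / c"
    have t0: "t > 0" using sc by (simp add: t_def)
    have tc: "t * c = 2" using sc by (simp add: t_def)
    have "F (t* s) (t*c) = t * F s c" by (rule hom) (use sc t0 in auto)
    moreover have "F (t* s) 2 = p*(t* s) + (p*2 - m 2 + L 2)"
      using big[of "t* s" 2] sc t0 by (simp add: mult_pos_pos)
    ultimately have "t * F s c = p*(t* s) + 2*q" unfolding tc q_def by (simp add: field_simps)
    then have "F s c = p* s + 2*q/t" using t0 by (simp add: field_simps)
    then show "F s c = p * s + q * c" using sc by (simp add: t_def)
  qed
  then show ?thesis by blast
qed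

lemma frac01:
  fixes p q :: real
  assumes "0 < p" "p < q"
  shows "p / q \<in> {0<..<1}"
proof -
  have q: "q > 0" using assms by linarith
  have "p / q > 0" using divide_pos_pos[OF assms(1) q] .
  moreover have "p / q < 1" using divide_less_eq_1_pos[OF q] assms(2) by simp
  ultimately show ?thesis by simp
qed

theorem mainTheorem8:
  fixes B :: "real \<Rightarrow> real \<Rightarrow> real"
  assumes meas1: "\<And>y. y \<in> {0<..<1} \<Longrightarrow>
             (\<lambda>x. B x y) \<in> borel_measurable (restrict_space lebesgue {0<..<1})"
    and meas2: "\<And>x. x \<in> {0<..<1} \<Longrightarrow>
             (\<lambda>y. B x y) \<in> borel_measurable (restrict_space lebesgue {0<..<1})"
    and feq: "\<And>x y u v. x \<in> {0<..<1} \<Longrightarrow> y \<in> {0<..<1} \<Longrightarrow> u \<in> {0<..<1} \<Longrightarrow>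
             v \<in> {0<..<1} \<Longrightarrow> x + u \<in> {0<..<1} \<Longrightarrow> y + v \<in> {0<..<1} \<Longrightarrow>
             B x y + (1 - x) * B (u / (1 - x)) (v / (1 - y))
               = B u v + (1 - u) * B (x / (1 - u)) (y / (1 - v))"
    and sym: "\<And>x y. x \<in> {0<..<1} \<Longrightarrow> y \<in> {0<..<1} \<Longrightarrow> B x y = B (1 - x) (1 - y)"
    and diag: "\<And>x. x \<in> {0<..<1} \<Longrightarrow> B x x = 0"
  shows "\<exists>c::real. \<forall>x\<in>{0<..<1}. \<forall>y\<in>{0<..<1}.
           B x y = c * (x * ln (x / y) + (1 - x) * ln ((1 - x) / (1 - y)))"
proof -
  define Phi where "Phi a al b be = (a + b) * B (a / (a + b)) (al / (al + be))" for a al b be :: real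
  have Eq': "Phi a al (b + c) (be + ga) + Phi b be c ga = Phi b be (a + c) (al + ga) + Phi a al c ga"
    if pos: "a > 0" "b > 0" "c > 0" "al > 0" "be > 0" "ga > 0" for a b c al be ga
  proof -
    define T where "T = a + b + c"
    define G where "G = al + be + ga"
    define x where "x = a / T"
    define y where "y = al / G"
    define u where "u = b / T"
    define v where "v = be / G"
    have T0: "T > 0" and G0: "G > 0" using pos by (auto simp: T_def G_def)
    have mx: "x \<in> {0<..<1}" unfolding x_def by (rule frac01) (use pos in \<open>auto simp: T_def\<close>)
    have my: "y \<in> {0<..<1}" unfolding y_def by (rule frac01) (use pos in \<open>auto simp: G_def\<close>)
    have mu: "u \<in> {0<..<1}" unfolding u_def by (rule frac01) (use pos in \<open>auto simp: T_def\<close>)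
    have mv: "v \<in> {0<..<1}" unfolding v_def by (rule frac01) (use pos in \<open>auto simp: G_def\<close>)
    have "x + u = (a + b) / T" unfolding x_def u_def by (simp add: add_divide_distrib)
    then have mxu: "x + u \<in> {0<..<1}" using frac01[of "a + b" T] pos by (simp add: T_def)
    have "y + v = (al + be) / G" unfolding y_def v_def by (simp add: add_divide_distrib)
    then have myv: "y + v \<in> {0<..<1}" using frac01[of "al + be" G] pos by (simp add: G_def)
    have e: "B x y + (1 - x) * B (u / (1 - x)) (v / (1 - y))
               = B u v + (1 - u) * B (x / (1 - u)) (y / (1 - v))"
      by (rule feq[OF mx my mu mv mxu myv])
    have Tn: "T \<noteq> 0" "G \<noteq> 0" "b + c \<noteq> 0" "a + c \<noteq> 0" "be + ga \<noteq> 0" "al + ga \<noteq> 0"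
      using T0 G0 pos by auto
    have ox: "1 - x = (b + c) / T" unfolding x_def using Tn by (simp add: T_def field_simps)
    have ou: "1 - u = (a + c) / T" unfolding u_def using Tn by (simp add: T_def field_simps)
    have oy: "1 - y = (be + ga) / G" unfolding y_def using Tn by (simp add: G_def field_simps)
    have ov: "1 - v = (al + ga) / G" unfolding v_def using Tn by (simp add: G_def field_simps)
    have r1: "u / (1 - x) = b / (b + c)" unfolding ox u_def using Tn by (simp add: field_simps)
    have r2: "v / (1 - y) = be / (be + ga)" unfolding oy v_def using Tn by (simp add: field_simps)
    have r3: "x / (1 - u) = a / (a + c)" unfolding ou x_def using Tn by (simp add: field_simps)
    have r4: "y / (1 - v) = al / (al + ga)" unfolding ov y_def using Tn by (simp add: field_simps)
    have h1: "T * (1 - x) = b + c" unfolding ox using Tn by simp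
    have h2: "T * (1 - u) = a + c" unfolding ou using Tn by simp
    have P1: "Phi a al (b + c) (be + ga) = T * B x y"
      unfolding Phi_def x_def y_def T_def G_def by (simp add: add.assoc)
    have P2: "Phi b be c ga = T * (1 - x) * B (u / (1 - x)) (v / (1 - y))"
      unfolding r1 r2 h1 Phi_def ..
    have P3: "Phi b be (a + c) (al + ga) = T * B u v"
      unfolding Phi_def u_def v_def T_def G_def by (simp add: ac_simps)
    have P4: "Phi a al c ga = T * (1 - u) * B (x / (1 - u)) (y / (1 - v))"
      unfolding r3 r4 h2 Phi_def ..
    have "T * (B x y + (1 - x) * B (u / (1 - x)) (v / (1 - y)))
          = T * (B u v + (1 - u) * B (x / (1 - u)) (y / (1 - v)))" using e by simp
    then show ?thesis unfolding P1 P2 P3 P4 by (simp add: distrib_left mult.assoc)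
  qed
  have Sym: "Phi a al b be = Phi b be a al" if "a > 0" "b > 0" "al > 0" "be > 0" for a al b be
  proof -
    have m1: "a / (a + b) \<in> {0<..<1}" using that by (intro frac01) auto
    have m2: "al / (al + be) \<in> {0<..<1}" using that by (intro frac01) auto
    have "B (a / (a + b)) (al / (al + be)) = B (1 - a / (a + b)) (1 - al / (al + be))"
      by (rule sym[OF m1 m2])
    moreover have "1 - a / (a + b) = b / (b + a)" "1 - al / (al + be) = be / (be + al)"
      using that by (simp_all add: field_simps)
    ultimately show ?thesis by (simp add: Phi_def add.commute)
  qed
  have Coc: "Phi a al b be + Phi (a + b) (al + be) c ga = Phi a al (b + c) (be + ga) + Phi b be c ga"
    if pos: "a > 0" "b > 0" "c > 0" "al > 0" "be > 0" "ga > 0" for a b c al be ga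
  proof -
    have 1: "Phi c ga (b + a) (be + al) + Phi b be a al = Phi b be (c + a) (ga + al) + Phi c ga a al"
      using Eq'[of c b a ga be al] pos by simp
    have 2: "Phi a al (b + c) (be + ga) + Phi b be c ga = Phi b be (a + c) (al + ga) + Phi a al c ga"
      using Eq'[of a b c al be ga] pos by simp
    have 3: "Phi (a + b) (al + be) c ga = Phi c ga (a + b) (al + be)" using Sym[of "a + b" c "al + be" ga] pos by simp
    have 4: "Phi a al b be = Phi b be a al" using Sym[of a b al be] pos by simp
    have 5: "Phi c ga a al = Phi a al c ga" using Sym[of c a ga al] pos by simp
    have 6: "Phi c ga (b + a) (be + al) = Phi c ga (a + b) (al + be)" by (simp add: add.commute)
    have 7: "Phi b be (c + a) (ga + al) = Phi b be (a + c) (al + ga)" by (simp add: add.commute)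
    show ?thesis using 1 2 3 4 5 6 7 by linarith
  qed
  have Hom: "Phi (t * s) al (t * c) be = t * Phi s al c be" if "t > 0" "s > 0" "c > 0" for t s c al be
  proof -
    have e: "t * s + t * c = t * (s + c)" by (simp add: algebra_simps)
    have "t * s / (t * (s + c)) = s / (s + c)" using that by simp
    then show ?thesis unfolding Phi_def e by simp
  qed
  have affine: "\<exists>p q. \<forall>x. 0 < x \<longrightarrow> x < 1 \<longrightarrow> B x y - B x (1/2) = p * x + q * (1 - x)"
    if y: "y \<in> {0<..<1}" for y
  proof -
    define g where "g = (1 - y) / y"
    have g0: "g > 0" using y by (simp add: g_def)
    define F where "F s c = Phi s 1 c g - Phi s 1 c 1" for s c
    define G where "G a t = Phi a (1/2) t (1/2 + g) - Phi a (1/2) t (3/2)" for a t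
    define H where "H b c = Phi b (1/2) c g - Phi b (1/2) c 1" for b c
    have "\<exists>p q. \<forall>s c. s > 0 \<longrightarrow> c > 0 \<longrightarrow> F s c = p * s + q * c"
    proof (rule pexider_linear[of F G H])
      fix t s c :: real assume "t > 0" "s > 0" "c > 0"
      then show "F (t * s) (t * c) = t * F s c"
        unfolding F_def using Hom[of t s c 1 g] Hom[of t s c 1 1] by (simp add: right_diff_distrib)
    next
      fix a b c :: real assume abc: "a > 0" "b > 0" "c > 0"
      have c1: "Phi a (1/2) b (1/2) + Phi (a + b) (1/2 + 1/2) c g = Phi a (1/2) (b + c) (1/2 + g) + Phi b (1/2) c g"
        by (rule Coc) (use abc g0 in auto)
      have c2: "Phi a (1/2) b (1/2) + Phi (a + b) (1/2 + 1/2) c 1 = Phi a (1/2) (b + c) (1/2 + 1) + Phi b (1/2) c 1"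
        by (rule Coc) (use abc in auto)
      have e: "(1/2::real) + 1/2 = 1" "(1/2::real) + 1 = 3/2" by simp_all
      show "F (a + b) c = G a (b + c) + H b c"
        using c1 c2 unfolding F_def G_def H_def e by linarith
    qed
    then obtain p q where pq: "\<And>s c. s > 0 \<Longrightarrow> c > 0 \<Longrightarrow> F s c = p * s + q * c" by blast
    have "B x y - B x (1/2) = p * x + q * (1 - x)" if "0 < x" "x < 1" for x
    proof -
      have "1 / (1 + g) = y" using y by (simp add: g_def field_simps)
      then have "Phi x 1 (1 - x) g = B x y" by (simp add: Phi_def)
      moreover have "Phi x 1 (1 - x) 1 = B x (1/2)" by (simp add: Phi_def)
      ultimately show ?thesis using pq[of x "1 - x"] that by (simp add: F_def)
    qed
    then show ?thesis by blast
  qed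
  define A where "A y = 4 * ((B (1/2) y - B (1/2) (1/2)) - (B (1/4) y - B (1/4) (1/2)))" for y
  define C0 where "C0 y = (B (1/4) y - B (1/4) (1/2)) - A y / 4" for y
  have Rep1: "B x y = B x (1/2) + A y * x + C0 y" if x: "x \<in> {0<..<1}" and y: "y \<in> {0<..<1}" for x y
  proof -
    obtain p q where pq: "\<And>x. 0 < x \<Longrightarrow> x < 1 \<Longrightarrow> B x y - B x (1/2) = p * x + q * (1 - x)"
      using affine[OF y] by blast
    have e0: "B x y - B x (1/2) = p * x + q * (1 - x)" using pq x by auto
    have e1: "B (1/2) y = B (1/2) (1/2) + p / 2 + q / 2" using pq[of "1/2"] by simp
    have e2: "B (1/4) y = B (1/4) (1/2) + p / 4 + 3 * q / 4" using pq[of "1/4"] by simp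
    have a: "A y = p - q" unfolding A_def e1 e2 by (simp add: algebra_simps)
    have c: "C0 y = q" unfolding C0_def a unfolding e2 by (simp add: field_simps)
    have "(p - q) * x + q = p * x + q * (1 - x)" by (simp add: algebra_simps)
    then show ?thesis unfolding a c using e0 by linarith
  qed
  have Rep: "B x y = (A y - A x) * x + C0 y - C0 x" if x: "x \<in> {0<..<1}" and y: "y \<in> {0<..<1}" for x y
  proof -
    have "B x x = B x (1/2) + A x * x + C0 x" using Rep1[OF x x] .
    then have "B x (1/2) = - A x * x - C0 x" using diag[OF x] by simp
    then show ?thesis using Rep1[OF x y] by (simp add: algebra_simps)
  qed
  define X where "X x u = x * A x + C0 x + u * A (u / (1 - x)) + (1 - x) * C0 (u / (1 - x))" for x u
  define P0 where "P0 = 4 * (X (1/2) (1/4) - X (1/4) (1/2))"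
  have Pc: "A y - C0 (v / (1 - y)) - A (y / (1 - v)) = P0"
    if y: "y \<in> {0<..<1}" and v: "v \<in> {0<..<1}" and yv: "y + v \<in> {0<..<1}" for y v
  proof -
    have m1: "v / (1 - y) \<in> {0<..<1}" using y v yv by (intro frac01) auto
    have m2: "y / (1 - v) \<in> {0<..<1}" using y v yv by (intro frac01) auto
    have q1: "(1/2::real) \<in> {0<..<1}" "(1/4::real) \<in> {0<..<1}" "(1/2::real) + 1/4 \<in> {0<..<1}"
      "(1/4::real) + 1/4 \<in> {0<..<1}" "(1/4::real) / (1 - 1/2) \<in> {0<..<1}" "(1/2::real) / (1 - 1/4) \<in> {0<..<1}"
      "(1/4::real) / (1 - 1/4) \<in> {0<..<1}" by auto
    have e1: "B (1/2) y + (1 - 1/2) * B ((1/4) / (1 - 1/2)) (v / (1 - y))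
               = B (1/4) v + (1 - 1/4) * B ((1/2) / (1 - 1/4)) (y / (1 - v))"
      by (rule feq) (use y v yv q1 in auto)
    have e2: "B (1/4) y + (1 - 1/4) * B ((1/4) / (1 - 1/4)) (v / (1 - y))
               = B (1/4) v + (1 - 1/4) * B ((1/4) / (1 - 1/4)) (y / (1 - v))"
      by (rule feq) (use y v yv q1 in auto)
    note R1 = Rep[OF q1(1) y]
    note R2 = Rep[OF q1(5) m1]
    note R3 = Rep[OF q1(2) v]
    note R4 = Rep[OF q1(6) m2]
    note R5 = Rep[OF q1(2) y]
    note R6 = Rep[OF q1(7) m1]
    note R8 = Rep[OF q1(7) m2]
    show ?thesis using e1 e2 R1 R2 R3 R4 R5 R6 R8 unfolding P0_def X_def
      by (simp add: algebra_simps)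
  qed
  define C1 where "C1 w = C0 w + P0" for w
  have RepC: "B x y = (A y - A x) * x + C1 y - C1 x" if "x \<in> {0<..<1}" "y \<in> {0<..<1}" for x y
    using Rep[OF that] by (simp add: C1_def)
  have Key: "A (y / (1 - v)) - A y = - C1 (v / (1 - y))"
    if "y \<in> {0<..<1}" "v \<in> {0<..<1}" "y + v \<in> {0<..<1}" for y v
    using Pc[OF that] by (simp add: C1_def)
  have Am: "A \<in> borel_measurable (restrict_space lebesgue {0<..<1})"
  proof -
    have m1: "(\<lambda>y. B (1/2) y) \<in> borel_measurable (restrict_space lebesgue {0<..<1})"
      by (rule meas2) simp
    have m2: "(\<lambda>y. B (1/4) y) \<in> borel_measurable (restrict_space lebesgue {0<..<1})"
      by (rule meas2) simp
    show ?thesis unfolding A_def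
      by (intro borel_measurable_times borel_measurable_diff borel_measurable_const m1 m2)
  qed
  define f where "f t = A (exp t / (1 + exp t)) - A (1/2)" for t
  have fm: "f \<in> borel_measurable lebesgue"
    unfolding f_def by (intro borel_measurable_diff borel_measurable_const logistic_comp_meas[OF Am])
  have KeyT: "A (exp (t + s) / (1 + exp (t + s))) - A (exp t / (1 + exp t)) = - C1 (1 - exp (- s))"
    if s: "s > 0" for t s
  proof -
    define E where "E = exp t"
    define Q where "Q = exp s"
    have E0: "E > 0" and Q1: "Q > 1" using s by (auto simp: E_def Q_def)
    define y where "y = E / (1 + E)"
    define w where "w = 1 - 1 / Q"
    define v where "v = w * (1 - y)"
    have w01: "w \<in> {0<..<1}" using Q1 by (auto simp: w_def field_simps)
    have y01: "y \<in> {0<..<1}" unfolding y_def by (rule frac01) (use E0 in auto)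
    have oy: "1 - y = 1 / (1 + E)" using E0 by (simp add: y_def field_simps)
    have v01: "v \<in> {0<..<1}" unfolding v_def oy using w01 E0 by (auto simp: field_simps)
    have yv: "y + v \<in> {0<..<1}"
    proof -
      have "y + v = y + w * (1 - y)" by (simp add: v_def)
      moreover have "w * (1 - y) < 1 - y" using w01 y01 by simp
      moreover have "w * (1 - y) > 0" using w01 y01 by simp
      ultimately show ?thesis using y01 by auto
    qed
    have k: "A (y / (1 - v)) - A y = - C1 (v / (1 - y))" by (rule Key[OF y01 v01 yv])
    have "v / (1 - y) = w" using y01 by (simp add: v_def)
    moreover have "w = 1 - exp (- s)" by (simp add: w_def Q_def exp_minus field_simps)
    moreover have "y / (1 - v) = exp (t + s) / (1 + exp (t + s))"
    proof -
      have EQ: "E * Q > 0" using E0 Q1 by simp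
      have nz1: "Q \<noteq> 0" "1 + E \<noteq> 0" "Q + E * Q \<noteq> 0" "E * Q + 1 \<noteq> 0"
        using E0 Q1 EQ by linarith+
      have nz2: "Q * (1 + E) \<noteq> 0" using nz1 by simp
      note nz = nz1 nz2
      have ov: "1 - v = (E * Q + 1) / (Q * (1 + E))"
        unfolding v_def oy w_def using nz by (simp add: field_simps)
      have "E * Q / (E * Q + 1) * ((E * Q + 1) / (Q * (1 + E)))
            = (E * Q * (E * Q + 1)) / ((E * Q + 1) * (Q * (1 + E)))"
        by (simp only: times_divide_times_eq)
      also have "\<dots> = E / (1 + E)"
      proof (rule frac_eq_eq[THEN iffD2])
        show "(E * Q + 1) * (Q * (1 + E)) \<noteq> 0" using nz by simp
        show "1 + E \<noteq> 0" using nz by simp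
        show "E * Q * (E * Q + 1) * (1 + E) = E * ((E * Q + 1) * (Q * (1 + E)))"
          by (simp add: algebra_simps)
      qed
      finally have h: "E * Q / (E * Q + 1) * (1 - v) = y"
        unfolding ov y_def .
      have "1 - v \<noteq> 0" using v01 by simp
      then have "y / (1 - v) = E * Q / (E * Q + 1)" unfolding h[symmetric] by simp
      then show ?thesis by (simp add: E_def Q_def exp_add)
    qed
    moreover have "y = exp t / (1 + exp t)" by (simp add: y_def E_def)
    ultimately show ?thesis using k by simp
  qed
  have f0: "f 0 = 0" by (simp add: f_def)
  have fpos: "f (t + s) = f t + f s" if "s > 0" for t s
    using KeyT[OF that, of t] KeyT[OF that, of 0] by (simp add: f_def)
  have fadd: "f (t + s) = f t + f s" for t s
  proof (cases "s > 0")
    case True then show ?thesis by (rule fpos)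
  next
    case False
    show ?thesis
    proof (cases "s = 0")
      case True then show ?thesis using f0 by simp
    next
      case False
      then have s: "- s > 0" using \<open>\<not> s > 0\<close> by simp
      have "f t = f ((t + s) + (- s))" by simp
      also have "\<dots> = f (t + s) + f (- s)" by (rule fpos[OF s])
      finally have 1: "f t = f (t + s) + f (- s)" .
      have "f 0 = f (s + (- s))" by simp
      also have "\<dots> = f s + f (- s)" by (rule fpos[OF s])
      finally have 2: "0 = f s + f (- s)" using f0 by simp
      from 1 2 show ?thesis by linarith
    qed
  qed
  define \<kappa> where "\<kappa> = f 1"
  have flin: "f t = \<kappa> * t" for t
    unfolding \<kappa>_def by (rule measurable_additive_linear[OF fm fadd])
  have Aval: "A y = A (1/2) + \<kappa> * (ln y - ln (1 - y))" if y: "y \<in> {0<..<1}" for y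
  proof -
    define l where "l = ln y - ln (1 - y)"
    have y': "0 < y" "y < 1" using y by auto
    have "exp l = y / (1 - y)" using y' by (simp add: l_def exp_diff)
    then have "exp l / (1 + exp l) = (y / (1 - y)) / (1 + y / (1 - y))" by simp
    also have "\<dots> = y" using y' by (simp add: field_simps)
    finally have "exp l / (1 + exp l) = y" .
    then have "f l = A y - A (1/2)" by (simp add: f_def)
    then show ?thesis using flin[of l] by (simp add: l_def)
  qed
  have Cval: "C1 w = \<kappa> * ln (1 - w)" if w: "w \<in> {0<..<1}" for w
  proof -
    have w': "0 < w" "w < 1" using w by auto
    have h: "(1/2::real) \<in> {0<..<1}" "w / 2 \<in> {0<..<1}" "1/2 + w / 2 \<in> {0<..<1}" using w' by auto
    have k: "A ((1/2) / (1 - w / 2)) - A (1/2) = - C1 ((w / 2) / (1 - 1/2))" by (rule Key[OF h])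
    have z: "(1/2) / (1 - w / 2) = 1 / (2 - w)" using w' by (simp add: field_simps)
    have z01: "1 / (2 - w) \<in> {0<..<1}" by (rule frac01) (use w' in auto)
    have oz: "1 - 1 / (2 - w) = (1 - w) / (2 - w)" using w' by (simp add: field_simps)
    have lz: "ln (1 / (2 - w)) - ln (1 - 1 / (2 - w)) = - ln (1 - w)"
      unfolding oz using w' by (simp add: ln_div)
    have "A (1 / (2 - w)) = A (1/2) - \<kappa> * ln (1 - w)" using Aval[OF z01] lz by simp
    then show ?thesis using k z by simp
  qed
  show ?thesis
  proof (intro exI[of _ "- \<kappa>"] ballI)
    fix x y :: real assume x: "x \<in> {0<..<1}" and y: "y \<in> {0<..<1}"
    have x': "0 < x" "x < 1" and y': "0 < y" "y < 1" using x y by auto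
    have l1: "ln (x / y) = ln x - ln y" using x' y' by (simp add: ln_div)
    have l2: "ln ((1 - x) / (1 - y)) = ln (1 - x) - ln (1 - y)" using x' y' by (simp add: ln_div)
    have "B x y = (A y - A x) * x + C1 y - C1 x" by (rule RepC[OF x y])
    also have "\<dots> = - \<kappa> * (x * ln (x / y) + (1 - x) * ln ((1 - x) / (1 - y)))"
      unfolding Aval[OF x] Aval[OF y] Cval[OF x] Cval[OF y] l1 l2 by (simp add: algebra_simps)
    finally show "B x y = - \<kappa> * (x * ln (x / y) + (1 - x) * ln ((1 - x) / (1 - y)))" .
  qed
qed

end
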